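(* Let $K>0$, $\alpha>0$ and $0<x<1$. Let $f_{1}(x,K)$ be the probability that a centered Gaussian vector $(v_1,v_2)$ with $\mathbb{E}[v_1^2]=\mathbb{E}[v_2^2]=1$ and $\mathbb{E}[v_1v_2]=1-2x$ takes values in the box $[-K,K]^2$, and define $$\alpha_{UB}(x,K)\equiv-\frac{\ln 2+H_{2}(x)}{\ln f_{1}(x,K)}.$$ If $\alpha>\alpha_{UB}(x,K)$, then with high probability there are no SAT-$x$-pairs, i.e. $\lim_{N\to\infty}\mathbb{P}\left[\mathcal{Z}_{2}(x,K,\boldsymbol{\xi})>0\right]=0$.
   Context: Rectangular binary perceptron: for $N\ge1$ and $M$ with $M/N=\alpha$ (e.g. $M=\lfloor\alpha N\rfloor$), let $\xi_i^\mu$, $i=1,\dots,N$, $\mu=1,\dots,M$, be i.i.d. Gaussian with mean $0$ and variance $1/N$. A vector $\mathbf{w}\in\{-1,1\}^N$ is a solution if $\sum_{i=1}^N w_i\xi_i^\mu\in[-K,K]$ for all $\mu=1,\dots,M$. The Hamming distance is $d_H(\mathbf{w}^1,\mathbf{w}^2)=\sum_i(1-w_i^1w_i^2)/2$. A SAT-$x$-pair is an ordered pair $(\mathbf{w}^1,\mathbf{w}^2)$ of solutions with $d_H(\mathbf{w}^1,\mathbf{w}^2)=\lfloor Nx\rfloor$, and $\mathcal{Z}_{2}(x,K,\boldsymbol{\xi})$ denotes the number of such pairs. $H_2(x)=-x\ln x-(1-x)\ln(1-x)$. *)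

theory Defs
  imports "HOL-Probability.Probability"
begin

definition H2 :: "real \<Rightarrow> real" where
  "H2 x = - x * ln x - (1 - x) * ln (1 - x)"

definition bivariate_normal_density :: "real \<Rightarrow> real \<times> real \<Rightarrow> real" where
  "bivariate_normal_density rho = (\<lambda>(v1, v2).
     1 / (2 * pi * sqrt (1 - rho\<^sup>2)) *
     exp (- (v1\<^sup>2 - 2 * rho * v1 * v2 + v2\<^sup>2) / (2 * (1 - rho\<^sup>2))))"

definition f1 :: "real \<Rightarrow> real \<Rightarrow> real" where
  "f1 x K = measure (density lborel (bivariate_normal_density (1 - 2 * x)))
                    ({-K..K} \<times> {-K..K})"

definition alpha_UB :: "real \<Rightarrow> real \<Rightarrow> real" where
  "alpha_UB x K = - (ln 2 + H2 x) / ln (f1 x K)"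

definition numM :: "real \<Rightarrow> nat \<Rightarrow> nat" where
  "numM \<alpha> N = nat \<lfloor>\<alpha> * real N\<rfloor>"

text \<open>Disorder: xi(i,mu), i < N, mu < M, i.i.d. N(0, 1/N).\<close>
definition disorder :: "nat \<Rightarrow> nat \<Rightarrow> (nat \<times> nat \<Rightarrow> real) measure" where
  "disorder N M = PiM ({..<N} \<times> {..<M}) (\<lambda>_. density lborel (normal_density 0 (sqrt (1 / real N))))"

definition cube :: "nat \<Rightarrow> (nat \<Rightarrow> real) set" where
  "cube N = {..<N} \<rightarrow>\<^sub>E {-1, 1}"

definition is_solution :: "nat \<Rightarrow> nat \<Rightarrow> real \<Rightarrow> (nat \<times> nat \<Rightarrow> real) \<Rightarrow> (nat \<Rightarrow> real) \<Rightarrow> bool" where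
  "is_solution N M K \<xi> w \<longleftrightarrow> w \<in> cube N \<and>
     (\<forall>\<mu> < M. (\<Sum>i<N. w i * \<xi> (i, \<mu>)) \<in> {-K..K})"

definition hamming :: "nat \<Rightarrow> (nat \<Rightarrow> real) \<Rightarrow> (nat \<Rightarrow> real) \<Rightarrow> nat" where
  "hamming N w1 w2 = card {i \<in> {..<N}. w1 i \<noteq> w2 i}"

definition Z2 :: "nat \<Rightarrow> nat \<Rightarrow> real \<Rightarrow> real \<Rightarrow> (nat \<times> nat \<Rightarrow> real) \<Rightarrow> nat" where
  "Z2 N M x K \<xi> = card {(w1, w2). is_solution N M K \<xi> w1 \<and> is_solution N M K \<xi> w2 \<and>
       hamming N w1 w2 = nat \<lfloor>real N * x\<rfloor>}"

end

theory Submission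
  imports Defs "HOL-Real_Asymp.Real_Asymp"
begin


abbreviation N01 :: "real measure" where "N01 \<equiv> density lborel std_normal_density"
abbreviation P2 :: "(real \<times> real) measure" where "P2 \<equiv> N01 \<Otimes>\<^sub>M N01"

lemma prob_N01: "prob_space N01" by (rule prob_space_normal_density) simp

lemma prob_P2: "prob_space P2"
proof -
  interpret a: prob_space N01 by (rule prob_N01)
  interpret pair_prob_space N01 N01 ..
  show ?thesis by (rule P.prob_space_axioms)
qed

lemma P2_iter:
  assumes S[measurable]: "S \<in> sets borel"
  shows "emeasure P2 S = (\<integral>\<^sup>+s. \<integral>\<^sup>+r. ennreal (std_normal_density s * std_normal_density r) * indicator S (s,r) \<partial>lborel \<partial>lborel)"
proof -
  interpret a: prob_space N01 by (rule prob_N01)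
  have "emeasure P2 S = (\<integral>\<^sup>+x. \<integral>\<^sup>+y. indicator S (x,y) \<partial>N01 \<partial>N01)"
    proof (rule a.emeasure_pair_measure)
    have "sets P2 = sets (borel \<Otimes>\<^sub>M borel)" by (intro sets_pair_measure_cong) auto
    then show "S \<in> sets P2" using S borel_prod by metis
  qed
  also have "\<dots> = (\<integral>\<^sup>+x. ennreal (std_normal_density x) * \<integral>\<^sup>+y. ennreal (std_normal_density y) * indicator S (x,y) \<partial>lborel \<partial>lborel)"
    by (simp add: nn_integral_density)
  also have "\<dots> = (\<integral>\<^sup>+s. \<integral>\<^sup>+r. ennreal (std_normal_density s * std_normal_density r) * indicator S (s,r) \<partial>lborel \<partial>lborel)"
    by (subst nn_integral_cmult[symmetric]) (auto simp: ennreal_mult mult.assoc intro!: nn_integral_cong)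
  finally show ?thesis .
qed

lemma biv_eq:
  fixes a b v1 v2 :: real
  assumes a: "a > 0" and b: "b > 0" and ab: "a^2 + b^2 = 1"
  shows "bivariate_normal_density (a^2 - b^2) (v1, v2) =
    std_normal_density ((v1+v2)/(2*a)) * std_normal_density ((v1-v2)/(2*b)) / (2*a*b)"
proof -
  have r: "1 - (a^2 - b^2)^2 = (2*a*b)^2"
  proof -
    have "(a^2+b^2)^2 - (a^2-b^2)^2 = (2*a*b)^2" by algebra
    then show ?thesis using ab by simp
  qed
  have sq: "sqrt (1 - (a^2 - b^2)^2) = 2*a*b" using a b r by simp
  have e: "- (v1\<^sup>2 - 2 * (a^2 - b^2) * v1 * v2 + v2\<^sup>2) / (2 * (1 - (a^2 - b^2)\<^sup>2))
       = - ((v1+v2)/(2*a))\<^sup>2 / 2 + - ((v1-v2)/(2*b))\<^sup>2 / 2"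
  proof -
    have n: "v1\<^sup>2 - 2 * (a^2 - b^2) * v1 * v2 + v2\<^sup>2 = b^2*(v1+v2)^2 + a^2*(v1-v2)^2"
    proof -
      have "(a^2+b^2)*(v1\<^sup>2 + v2\<^sup>2) - 2 * (a^2 - b^2) * v1 * v2 = b^2*(v1+v2)^2 + a^2*(v1-v2)^2" by algebra
      then show ?thesis using ab by simp
    qed
    have "- (v1\<^sup>2 - 2 * (a^2 - b^2) * v1 * v2 + v2\<^sup>2) / (2 * (1 - (a^2 - b^2)\<^sup>2))
       = - (b^2*(v1+v2)^2 + a^2*(v1-v2)^2) / (2 * (2*a*b)^2)" by (simp only: n r)
    also have "\<dots> = - ((v1+v2)/(2*a))\<^sup>2 / 2 + - ((v1-v2)/(2*b))\<^sup>2 / 2"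
      using a b by (simp add: field_simps power2_eq_square)
    finally show ?thesis .
  qed
  have pi: "sqrt (2*pi) * sqrt (2*pi) = 2*pi" by simp
  show ?thesis
    unfolding bivariate_normal_density_def std_normal_density_def
    apply (simp only: split_conv sq e exp_add)
    using a b pi by (simp add: field_simps)
qed

lemma box_borel[measurable]: "({-K..K} \<times> {-K..K} :: (real \<times> real) set) \<in> sets borel"
  by (intro borel_closed closed_Times) auto

lemma sets_lborel2: "sets (lborel \<Otimes>\<^sub>M lborel) = (sets borel :: (real\<times>real) set set)"
proof -
  have "sets (lborel \<Otimes>\<^sub>M lborel) = sets (borel \<Otimes>\<^sub>M borel :: (real\<times>real) measure)"
    by (intro sets_pair_measure_cong) auto
  then show ?thesis by (metis borel_prod)
qed

lemma meas_pair: "(f :: real\<times>real \<Rightarrow> 'b::topological_space) \<in> borel_measurable borel \<Longrightarrow> f \<in> borel_measurable (lborel \<Otimes>\<^sub>M lborel)"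
  using measurable_cong_sets[OF sets_lborel2 refl] by blast

lemma sets_pair2: "(A :: (real\<times>real) set) \<in> sets borel \<Longrightarrow> A \<in> sets (lborel \<Otimes>\<^sub>M lborel)"
  using sets_lborel2 by blast

lemma f1_change:
  fixes a b K :: real
  assumes a: "a > 0" and b: "b > 0" and ab: "a^2 + b^2 = 1"
  shows "emeasure (density lborel (bivariate_normal_density (a^2 - b^2))) ({-K..K} \<times> {-K..K})
     = emeasure P2 {z. \<bar>a * fst z + b * snd z\<bar> \<le> K \<and> \<bar>a * fst z - b * snd z\<bar> \<le> K}"
proof -
  define B where "B = ({-K..K} \<times> {-K..K} :: (real \<times> real) set)"
  define S where "S = {z::real\<times>real. \<bar>a * fst z + b * snd z\<bar> \<le> K \<and> \<bar>a * fst z - b * snd z\<bar> \<le> K}"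
  define bv where "bv = bivariate_normal_density (a^2 - b^2)"
  have B[measurable]: "B \<in> sets borel" unfolding B_def by measurable
  have Sm[measurable]: "S \<in> sets borel" unfolding S_def by (intro borel_closed closed_Collect_conj closed_Collect_le continuous_intros)
  have bvm[measurable]: "bv \<in> borel_measurable borel"
  proof (rule borel_measurable_continuous_onI)
    have "1 - (a^2 - b^2)^2 = (2*a*b)^2"
    proof -
      have "(a^2+b^2)^2 - (a^2-b^2)^2 = (2*a*b)^2" by algebra
      then show ?thesis using ab by simp
    qed
    then have pos: "1 - (a^2 - b^2)^2 > 0" using a b by simp
    show "continuous_on UNIV bv" unfolding bv_def bivariate_normal_density_def case_prod_beta
      using pos by (intro continuous_intros) auto
  qed
  have rr: "1 - (a^2 - b^2)^2 = (2*a*b)^2"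
  proof -
    have "(a^2+b^2)^2 - (a^2-b^2)^2 = (2*a*b)^2" by algebra
    then show ?thesis using ab by simp
  qed
  have bvpos: "bv z \<ge> 0" for z unfolding bv_def bivariate_normal_density_def
    using rr by (auto simp: case_prod_beta intro!: mult_nonneg_nonneg divide_nonneg_nonneg)
  have "emeasure (density lborel bv) B = (\<integral>\<^sup>+z. ennreal (bv z) * indicator B z \<partial>lborel)"
    by (rule emeasure_density) auto
  also have "\<dots> = (\<integral>\<^sup>+z. ennreal (bv z) * indicator B z \<partial>(lborel \<Otimes>\<^sub>M lborel))"
    by (simp only: lborel_prod)
  also have "\<dots> = (\<integral>\<^sup>+v1. \<integral>\<^sup>+v2. ennreal (bv (v1,v2)) * indicator B (v1,v2) \<partial>lborel \<partial>lborel)"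
    by (rule lborel.nn_integral_fst[symmetric]) (rule meas_pair, measurable)
  also have "\<dots> = (\<integral>\<^sup>+v1. \<integral>\<^sup>+s. ennreal (std_normal_density s * std_normal_density ((v1 - a* s)/b) / b)
                        * indicator B (v1, 2*a* s - v1) \<partial>lborel \<partial>lborel)"
  proof (rule nn_integral_cong)
    fix v1 :: real
    have "(\<integral>\<^sup>+v2. ennreal (bv (v1,v2)) * indicator B (v1,v2) \<partial>lborel)
       = \<bar>2*a\<bar> * (\<integral>\<^sup>+s. ennreal (bv (v1, -v1 + 2*a* s)) * indicator B (v1, -v1 + 2*a* s) \<partial>lborel)"
      by (rule nn_integral_real_affine) (use a in auto)
    also have "\<dots> = (\<integral>\<^sup>+s. ennreal (2*a) * (ennreal (bv (v1, -v1 + 2*a* s)) * indicator B (v1, -v1 + 2*a* s)) \<partial>lborel)"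
      using a by (subst nn_integral_cmult) auto
    also have "\<dots> = (\<integral>\<^sup>+s. ennreal (std_normal_density s * std_normal_density ((v1 - a* s)/b) / b)
                        * indicator B (v1, 2*a* s - v1) \<partial>lborel)"
    proof (rule nn_integral_cong)
      fix s :: real
      have e: "2*a * bv (v1, -v1 + 2*a* s) = std_normal_density s * std_normal_density ((v1 - a* s)/b) / b"
      proof -
        have "2*a * bv (v1, -v1 + 2*a* s) = 2*a * (std_normal_density ((v1+(-v1 + 2*a* s))/(2*a)) * std_normal_density ((v1-(-v1 + 2*a* s))/(2*b)) / (2*a*b))"
          unfolding bv_def by (simp only: biv_eq[OF a b ab])
        also have "(v1+(-v1 + 2*a* s))/(2*a) = s" using a by simp
        also have "(v1-(-v1 + 2*a* s))/(2*b) = (v1 - a* s)/b" using b by (simp add: field_simps)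
        finally show ?thesis using a b by (simp add: field_simps)
      qed
      show "ennreal (2*a) * (ennreal (bv (v1, -v1 + 2*a* s)) * indicator B (v1, -v1 + 2*a* s)) =
         ennreal (std_normal_density s * std_normal_density ((v1 - a* s)/b) / b) * indicator B (v1, 2*a* s - v1)"
      proof -
        have q: "-v1 + 2*a * s = 2*a * s - v1" by simp
        have "ennreal (2*a) * (ennreal (bv (v1, -v1 + 2*a * s)) * indicator B (v1, -v1 + 2*a * s)) = ennreal (2*a * bv (v1, -v1 + 2*a * s)) * indicator B (v1, 2*a * s - v1)"
          unfolding q using a bvpos by (simp add: ennreal_mult mult.assoc)
        then show ?thesis unfolding e .
      qed
    qed
    finally show "(\<integral>\<^sup>+v2. ennreal (bv (v1,v2)) * indicator B (v1,v2) \<partial>lborel) = (\<integral>\<^sup>+s. ennreal (std_normal_density s * std_normal_density ((v1 - a* s)/b) / b)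
                        * indicator B (v1, 2*a* s - v1) \<partial>lborel)" .
  qed
  also have "\<dots> = (\<integral>\<^sup>+s. \<integral>\<^sup>+v1. ennreal (std_normal_density s * std_normal_density ((v1 - a* s)/b) / b)
                        * indicator B (v1, 2*a* s - v1) \<partial>lborel \<partial>lborel)"
    by (rule lborel_pair.Fubini') measurable
  also have "\<dots> = (\<integral>\<^sup>+s. \<integral>\<^sup>+r. ennreal (std_normal_density s * std_normal_density r) * indicator S (s,r) \<partial>lborel \<partial>lborel)"
  proof (rule nn_integral_cong)
    fix s :: real
    have "(\<integral>\<^sup>+v1. ennreal (std_normal_density s * std_normal_density ((v1 - a* s)/b) / b)
                        * indicator B (v1, 2*a* s - v1) \<partial>lborel)
      = \<bar>b\<bar> * (\<integral>\<^sup>+r. ennreal (std_normal_density s * std_normal_density ((a* s + b*r - a* s)/b) / b)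
                        * indicator B (a* s + b*r, 2*a* s - (a* s + b*r)) \<partial>lborel)"
      by (rule nn_integral_real_affine) (use b in auto)
    also have "\<dots> = (\<integral>\<^sup>+r. ennreal b * (ennreal (std_normal_density s * std_normal_density ((a* s + b*r - a* s)/b) / b)
                        * indicator B (a* s + b*r, 2*a* s - (a* s + b*r))) \<partial>lborel)"
      using b by (subst nn_integral_cmult) auto
    also have "\<dots> = (\<integral>\<^sup>+r. ennreal (std_normal_density s * std_normal_density r) * indicator S (s,r) \<partial>lborel)"
    proof (rule nn_integral_cong)
      fix r :: real
      have i: "indicator B (a* s + b*r, 2*a* s - (a* s + b*r)) = (indicator S (s,r) :: ennreal)"
        unfolding B_def S_def by (auto simp: indicator_def abs_le_iff algebra_simps)
      have e: "b * (std_normal_density s * std_normal_density ((a* s + b*r - a* s)/b) / b) = std_normal_density s * std_normal_density r"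
        using b by simp
      show "ennreal b * (ennreal (std_normal_density s * std_normal_density ((a* s + b*r - a* s)/b) / b)
                        * indicator B (a* s + b*r, 2*a* s - (a* s + b*r))) = ennreal (std_normal_density s * std_normal_density r) * indicator S (s,r)"
      proof -
        have "ennreal b * (ennreal (std_normal_density s * std_normal_density ((a * s + b*r - a * s)/b) / b)
                        * indicator B (a * s + b*r, 2*a * s - (a * s + b*r))) = ennreal (b * (std_normal_density s * std_normal_density ((a * s + b*r - a * s)/b) / b)) * indicator S (s,r)"
          unfolding i using b by (simp only: ennreal_mult mult.assoc less_imp_le normal_density_nonneg divide_nonneg_pos mult_nonneg_nonneg)
        then show ?thesis unfolding e .
      qed
    qed
    finally show "(\<integral>\<^sup>+v1. ennreal (std_normal_density s * std_normal_density ((v1 - a* s)/b) / b)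
                        * indicator B (v1, 2*a* s - v1) \<partial>lborel) = (\<integral>\<^sup>+r. ennreal (std_normal_density s * std_normal_density r) * indicator S (s,r) \<partial>lborel)" .
  qed
  also have "\<dots> = emeasure P2 S" by (rule P2_iter[symmetric]) fact
  finally show ?thesis unfolding B_def S_def bv_def .
qed

definition SS :: "real \<Rightarrow> real \<Rightarrow> real \<Rightarrow> (real \<times> real) set" where
  "SS a b K = {z. \<bar>a * fst z + b * snd z\<bar> \<le> K \<and> \<bar>a * fst z - b * snd z\<bar> \<le> K}"

lemma nd_scale: "\<sigma> > 0 \<Longrightarrow> \<sigma> * normal_density 0 \<sigma> (\<sigma> * r) = std_normal_density r"
  unfolding normal_density_def by (simp add: real_sqrt_mult field_simps power2_eq_square)

lemma scale_P2:
  fixes \<sigma>1 \<sigma>2 :: real and S :: "(real \<times> real) set"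
  assumes s1: "\<sigma>1 > 0" and s2: "\<sigma>2 > 0" and S[measurable]: "S \<in> sets (lborel \<Otimes>\<^sub>M lborel)"
  shows "(\<integral>\<^sup>+z. (case z of (x,y) \<Rightarrow> ennreal (normal_density 0 \<sigma>1 x) * ennreal (normal_density 0 \<sigma>2 y)) * indicator S z \<partial>(lborel \<Otimes>\<^sub>M lborel))
       = emeasure P2 {z. (\<sigma>1 * fst z, \<sigma>2 * snd z) \<in> S}"
proof -
  define S' where "S' = {z. (\<sigma>1 * fst z, \<sigma>2 * snd z) \<in> S}"
  have "S' = (\<lambda>z. (\<sigma>1 * fst z, \<sigma>2 * snd z)) -` S \<inter> space (lborel \<Otimes>\<^sub>M lborel)"
    unfolding S'_def by (auto simp: space_pair_measure)
  also have "\<dots> \<in> sets (lborel \<Otimes>\<^sub>M lborel)" by measurable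
  finally have S'm: "S' \<in> sets borel" using sets_lborel2 by blast
  have "(\<integral>\<^sup>+z. (case z of (x,y) \<Rightarrow> ennreal (normal_density 0 \<sigma>1 x) * ennreal (normal_density 0 \<sigma>2 y)) * indicator S z \<partial>(lborel \<Otimes>\<^sub>M lborel))
     = (\<integral>\<^sup>+x. \<integral>\<^sup>+y. ennreal (normal_density 0 \<sigma>1 x) * ennreal (normal_density 0 \<sigma>2 y) * indicator S (x,y) \<partial>lborel \<partial>lborel)"
  proof -
    have m: "(\<lambda>z. (case z of (x,y) \<Rightarrow> ennreal (normal_density 0 \<sigma>1 x) * ennreal (normal_density 0 \<sigma>2 y)) * indicator S z) \<in> borel_measurable (lborel \<Otimes>\<^sub>M lborel)"
      unfolding case_prod_beta by measurable
    show ?thesis by (subst lborel.nn_integral_fst[symmetric, OF m]) simp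
  qed
  also have "\<dots> = (\<integral>\<^sup>+x. \<integral>\<^sup>+r. ennreal (normal_density 0 \<sigma>1 x) * ennreal (std_normal_density r) * indicator S (x,\<sigma>2 * r) \<partial>lborel \<partial>lborel)"
  proof (rule nn_integral_cong)
    fix x :: real
    have "(\<integral>\<^sup>+y. ennreal (normal_density 0 \<sigma>1 x) * ennreal (normal_density 0 \<sigma>2 y) * indicator S (x,y) \<partial>lborel)
      = \<bar>\<sigma>2\<bar> * (\<integral>\<^sup>+r. ennreal (normal_density 0 \<sigma>1 x) * ennreal (normal_density 0 \<sigma>2 (0 + \<sigma>2 * r)) * indicator S (x,0 + \<sigma>2 * r) \<partial>lborel)"
      by (rule nn_integral_real_affine) (use s2 in auto)
    also have "\<dots> = (\<integral>\<^sup>+r. ennreal \<sigma>2 * (ennreal (normal_density 0 \<sigma>1 x) * ennreal (normal_density 0 \<sigma>2 (\<sigma>2 * r)) * indicator S (x,\<sigma>2 * r)) \<partial>lborel)"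
      using s2 by (subst nn_integral_cmult) auto
    also have "\<dots> = (\<integral>\<^sup>+r. ennreal (normal_density 0 \<sigma>1 x) * ennreal (std_normal_density r) * indicator S (x,\<sigma>2 * r) \<partial>lborel)"
    proof (rule nn_integral_cong)
      fix r :: real
      have "ennreal \<sigma>2 * ennreal (normal_density 0 \<sigma>2 (\<sigma>2 * r)) = ennreal (std_normal_density r)"
        using s2 by (simp add: ennreal_mult[symmetric] nd_scale)
      then show "ennreal \<sigma>2 * (ennreal (normal_density 0 \<sigma>1 x) * ennreal (normal_density 0 \<sigma>2 (\<sigma>2 * r)) * indicator S (x,\<sigma>2 * r)) =
        ennreal (normal_density 0 \<sigma>1 x) * ennreal (std_normal_density r) * indicator S (x,\<sigma>2 * r)"
        by (metis (no_types, lifting) mult.assoc mult.commute)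
    qed
    finally show "(\<integral>\<^sup>+y. ennreal (normal_density 0 \<sigma>1 x) * ennreal (normal_density 0 \<sigma>2 y) * indicator S (x,y) \<partial>lborel)
      = (\<integral>\<^sup>+r. ennreal (normal_density 0 \<sigma>1 x) * ennreal (std_normal_density r) * indicator S (x,\<sigma>2 * r) \<partial>lborel)" .
  qed
  also have "\<dots> = (\<integral>\<^sup>+r. \<integral>\<^sup>+x. ennreal (normal_density 0 \<sigma>1 x) * ennreal (std_normal_density r) * indicator S (x,\<sigma>2 * r) \<partial>lborel \<partial>lborel)"
    by (rule lborel_pair.Fubini'[symmetric]) measurable
  also have "\<dots> = (\<integral>\<^sup>+r. \<integral>\<^sup>+s. ennreal (std_normal_density s) * ennreal (std_normal_density r) * indicator S (\<sigma>1 * s,\<sigma>2 * r) \<partial>lborel \<partial>lborel)"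
  proof (rule nn_integral_cong)
    fix r :: real
    have "(\<integral>\<^sup>+x. ennreal (normal_density 0 \<sigma>1 x) * ennreal (std_normal_density r) * indicator S (x,\<sigma>2 * r) \<partial>lborel)
      = \<bar>\<sigma>1\<bar> * (\<integral>\<^sup>+s. ennreal (normal_density 0 \<sigma>1 (0 + \<sigma>1 * s)) * ennreal (std_normal_density r) * indicator S (0 + \<sigma>1 * s,\<sigma>2 * r) \<partial>lborel)"
      by (rule nn_integral_real_affine) (use s1 in auto)
    also have "\<dots> = (\<integral>\<^sup>+s. ennreal \<sigma>1 * (ennreal (normal_density 0 \<sigma>1 (\<sigma>1 * s)) * ennreal (std_normal_density r) * indicator S (\<sigma>1 * s,\<sigma>2 * r)) \<partial>lborel)"
      using s1 by (subst nn_integral_cmult) auto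
    also have "\<dots> = (\<integral>\<^sup>+s. ennreal (std_normal_density s) * ennreal (std_normal_density r) * indicator S (\<sigma>1 * s,\<sigma>2 * r) \<partial>lborel)"
    proof (rule nn_integral_cong)
      fix s :: real
      have "ennreal \<sigma>1 * ennreal (normal_density 0 \<sigma>1 (\<sigma>1 * s)) = ennreal (std_normal_density s)"
        using s1 by (simp add: ennreal_mult[symmetric] nd_scale)
      then show "ennreal \<sigma>1 * (ennreal (normal_density 0 \<sigma>1 (\<sigma>1 * s)) * ennreal (std_normal_density r) * indicator S (\<sigma>1 * s,\<sigma>2 * r)) =
        ennreal (std_normal_density s) * ennreal (std_normal_density r) * indicator S (\<sigma>1 * s,\<sigma>2 * r)"
        by (metis (no_types, lifting) mult.assoc)
    qed
    finally show "(\<integral>\<^sup>+x. ennreal (normal_density 0 \<sigma>1 x) * ennreal (std_normal_density r) * indicator S (x,\<sigma>2 * r) \<partial>lborel)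
      = (\<integral>\<^sup>+s. ennreal (std_normal_density s) * ennreal (std_normal_density r) * indicator S (\<sigma>1 * s,\<sigma>2 * r) \<partial>lborel)" .
  qed
  also have "\<dots> = (\<integral>\<^sup>+s. \<integral>\<^sup>+r. ennreal (std_normal_density s) * ennreal (std_normal_density r) * indicator S (\<sigma>1 * s,\<sigma>2 * r) \<partial>lborel \<partial>lborel)"
    by (rule lborel_pair.Fubini') measurable
  also have "\<dots> = (\<integral>\<^sup>+s. \<integral>\<^sup>+r. ennreal (std_normal_density s * std_normal_density r) * indicator S' (s,r) \<partial>lborel \<partial>lborel)"
    unfolding S'_def by (intro nn_integral_cong) (auto simp: ennreal_mult indicator_def)
  also have "\<dots> = emeasure P2 S'" by (rule P2_iter[symmetric]) fact
  finally show ?thesis unfolding S'_def .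
qed

lemma sets_P2: "sets P2 = sets borel"
proof -
  have "sets P2 = sets (borel \<Otimes>\<^sub>M borel :: (real\<times>real) measure)" by (intro sets_pair_measure_cong) auto
  then show ?thesis by (metis borel_prod)
qed

lemma SS_borel: "SS a b K \<in> sets borel"
  unfolding SS_def by (intro borel_closed closed_Collect_conj closed_Collect_le continuous_intros)

lemma SS_P2: "SS a b K \<in> sets P2"
  using SS_borel sets_P2 by blast

lemma abs_pm_iff: "(\<bar>p + q\<bar> \<le> K \<and> \<bar>p - q\<bar> \<le> K) \<longleftrightarrow> \<bar>p\<bar> + \<bar>q\<bar> \<le> (K::real)"
  by (cases "p \<ge> 0"; cases "q \<ge> 0") (auto simp: abs_le_iff)

lemma SS_alt: "a \<ge> 0 \<Longrightarrow> b \<ge> 0 \<Longrightarrow> SS a b K = {z. a * \<bar>fst z\<bar> + b * \<bar>snd z\<bar> \<le> K}"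
  unfolding SS_def using abs_pm_iff by (auto simp: abs_mult)

lemma SS_mono:
  assumes c: "c > 0" and a: "a \<ge> 0" "b \<ge> 0" and ca: "c * a \<le> a'" and cb: "c * b \<le> b'"
  shows "SS a' b' K \<subseteq> SS a b (K / c)"
proof
  fix z assume z: "z \<in> SS a' b' K"
  have a': "a' \<ge> 0" "b' \<ge> 0" using c a ca cb by (meson mult_nonneg_nonneg less_imp_le order_trans)+
  have "c * (a * \<bar>fst z\<bar> + b * \<bar>snd z\<bar>) \<le> a' * \<bar>fst z\<bar> + b' * \<bar>snd z\<bar>"
    using ca cb by (simp add: distrib_left mult.assoc[symmetric] add_mono mult_right_mono)
  also have "\<dots> \<le> K" using z SS_alt[OF a'] by auto
  finally have "a * \<bar>fst z\<bar> + b * \<bar>snd z\<bar> \<le> K / c" using c by (simp add: field_simps mult.commute)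
  then show "z \<in> SS a b (K / c)" using SS_alt[OF a] by auto
qed

lemma SS_cont:
  assumes a: "a \<ge> 0" "b \<ge> 0"
  shows "(\<lambda>n. measure P2 (SS a b (K + 1 / (real n + 1)))) \<longlonglongrightarrow> measure P2 (SS a b K)"
proof -
  interpret P: prob_space P2 by (rule prob_P2)
  have "(\<lambda>n. measure P2 (SS a b (K + 1 / (real n + 1)))) \<longlonglongrightarrow> measure P2 (\<Inter>n. SS a b (K + 1 / (real n + 1)))"
  proof (rule P.finite_Lim_measure_decseq)
    show "range (\<lambda>n. SS a b (K + 1 / (real n + 1))) \<subseteq> sets P2" using SS_P2 by auto
    show "decseq (\<lambda>n. SS a b (K + 1 / (real n + 1)))"
    proof (rule decseq_SucI)
      fix n
      have "1 / (real (Suc n) + 1) \<le> 1 / (real n + 1)" by (simp add: frac_le)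
      then show "SS a b (K + 1 / (real (Suc n) + 1)) \<subseteq> SS a b (K + 1 / (real n + 1))"
        unfolding SS_alt[OF a] by auto
    qed
  qed
  also have "(\<Inter>n. SS a b (K + 1 / (real n + 1))) = SS a b K"
  proof
    show "SS a b K \<subseteq> (\<Inter>n. SS a b (K + 1 / (real n + 1)))"
      unfolding SS_alt[OF a] by (auto intro: order_trans[OF _ less_imp_le[OF less_add_same_cancel1[THEN iffD2]]])
    show "(\<Inter>n. SS a b (K + 1 / (real n + 1))) \<subseteq> SS a b K"
    proof
      fix z assume z: "z \<in> (\<Inter>n. SS a b (K + 1 / (real n + 1)))"
      show "z \<in> SS a b K"
      proof (rule ccontr)
        assume "z \<notin> SS a b K"
        then have e: "a * \<bar>fst z\<bar> + b * \<bar>snd z\<bar> - K > 0" unfolding SS_alt[OF a] by auto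
        then obtain n where n: "inverse (real (Suc n)) < a * \<bar>fst z\<bar> + b * \<bar>snd z\<bar> - K"
          using reals_Archimedean[OF e] by blast
        have "a * \<bar>fst z\<bar> + b * \<bar>snd z\<bar> \<le> K + 1 / (real n + 1)" using z unfolding SS_alt[OF a] by auto
        then show False using n by (simp add: inverse_eq_divide add.commute)
      qed
    qed
  qed
  finally show ?thesis .
qed

lemma N01_Icc_pos:
  fixes l u :: real assumes lu: "l < u"
  shows "emeasure N01 {l..u} > 0"
proof -
  define R where "R = max \<bar>l\<bar> \<bar>u\<bar>"
  define m where "m = std_normal_density R"
  have m: "m > 0" unfolding m_def by (simp add: normal_density_pos)
  have le: "m \<le> std_normal_density x" if "x \<in> {l..u}" for x
  proof -
    have "\<bar>x\<bar> \<le> R" using that unfolding R_def by auto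
    then have "\<bar>x\<bar>^2 \<le> R^2" by (intro power_mono) auto
    then have "x^2 \<le> R^2" by simp
    then show ?thesis unfolding m_def std_normal_density_def by (intro mult_left_mono) auto
  qed
  have "emeasure N01 {l..u} = (\<integral>\<^sup>+x. ennreal (std_normal_density x) * indicator {l..u} x \<partial>lborel)"
    by (rule emeasure_density) auto
  also have "\<dots> \<ge> (\<integral>\<^sup>+x. ennreal m * indicator {l..u} x \<partial>lborel)"
    by (intro nn_integral_mono) (auto simp: indicator_def le)
  moreover have "(\<integral>\<^sup>+x. ennreal m * indicator {l..u} x \<partial>lborel) = ennreal m * ennreal (u - l)"
    using lu by (simp add: nn_integral_cmult_indicator)
  moreover have "ennreal m * ennreal (u - l) > 0" using m lu by (simp add: ennreal_mult[symmetric])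
  ultimately show ?thesis by (metis order_less_le_trans)
qed

lemma P2_Times: "A \<in> sets borel \<Longrightarrow> B \<in> sets borel \<Longrightarrow> emeasure P2 (A \<times> B) = emeasure N01 A * emeasure N01 B"
proof -
  interpret a: prob_space N01 by (rule prob_N01)
  assume "A \<in> sets borel" "B \<in> sets borel"
  then show ?thesis by (intro a.emeasure_pair_measure_Times) auto
qed

lemma P2_SS_pos:
  assumes a: "a > 0" and b: "b > 0" and K: "K > 0"
  shows "measure P2 (SS a b K) > 0"
proof -
  interpret P: prob_space P2 by (rule prob_P2)
  have sub: "{-K/(2*a)..K/(2*a)} \<times> {-K/(2*b)..K/(2*b)} \<subseteq> SS a b K"
  proof
    fix z :: "real \<times> real" assume z: "z \<in> {-K/(2*a)..K/(2*a)} \<times> {-K/(2*b)..K/(2*b)}"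
    then have "\<bar>fst z\<bar> \<le> K/(2*a)" "\<bar>snd z\<bar> \<le> K/(2*b)" by auto
    then have "a * \<bar>fst z\<bar> \<le> K/2" "b * \<bar>snd z\<bar> \<le> K/2" using a b by (simp_all add: field_simps)
    then show "z \<in> SS a b K" using SS_alt[of a b K] a b by auto
  qed
  have "0 < emeasure N01 {-K/(2*a)..K/(2*a)} * emeasure N01 {-K/(2*b)..K/(2*b)}"
  proof -
    have "-K/(2*a) < K/(2*a)" "-K/(2*b) < K/(2*b)" using a b K by (simp_all add: field_simps)
    then show ?thesis using N01_Icc_pos[of "-K/(2*a)" "K/(2*a)"] N01_Icc_pos[of "-K/(2*b)" "K/(2*b)"]
      by (simp add: ennreal_zero_less_mult_iff)
  qed
  also have "\<dots> = emeasure P2 ({-K/(2*a)..K/(2*a)} \<times> {-K/(2*b)..K/(2*b)})"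
    by (rule P2_Times[symmetric]) auto
  also have "\<dots> \<le> emeasure P2 (SS a b K)" by (rule emeasure_mono[OF sub SS_P2])
  finally show ?thesis by (simp add: P.emeasure_eq_measure)
qed

lemma P2_SS_lt1:
  assumes a: "a > 0" and b: "b > 0"
  shows "measure P2 (SS a b K) < 1"
proof -
  interpret P: prob_space P2 by (rule prob_P2)
  interpret N: prob_space N01 by (rule prob_N01)
  define c where "c = \<bar>K\<bar> / a + 1"
  have sub: "{c..c+1} \<times> UNIV \<subseteq> space P2 - SS a b K"
  proof
    fix z :: "real \<times> real" assume z: "z \<in> {c..c+1} \<times> UNIV"
    then have "fst z \<ge> c" by auto
    then have "a * \<bar>fst z\<bar> \<ge> a * c" using a by (intro mult_left_mono) auto
    moreover have "a * c = \<bar>K\<bar> + a" unfolding c_def using a by (simp add: field_simps)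
    ultimately have "a * \<bar>fst z\<bar> + b * \<bar>snd z\<bar> > K" using a b
      by (smt (verit) mult_nonneg_nonneg abs_ge_zero)
    then show "z \<in> space P2 - SS a b K" using SS_alt[of a b K] a b by (auto simp: space_pair_measure)
  qed
  have "0 < emeasure N01 {c..c+1} * emeasure N01 UNIV"
    using N01_Icc_pos[of c "c+1"] N.emeasure_space_1 by simp
  also have "\<dots> = emeasure P2 ({c..c+1} \<times> UNIV)"
    by (rule P2_Times[symmetric]) auto
  also have "\<dots> \<le> emeasure P2 (space P2 - SS a b K)"
    by (rule emeasure_mono[OF sub]) (rule sets.compl_sets[OF SS_P2])
  finally have "P.prob (space P2 - SS a b K) > 0" by (simp add: P.emeasure_eq_measure)
  then show ?thesis using P.prob_compl[OF SS_P2] by simp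
qed

lemma f1_SS:
  assumes x: "0 < x" "x < 1"
  shows "f1 x K = measure P2 (SS (sqrt (1 - x)) (sqrt x) K)"
proof -
  have a: "sqrt (1 - x) > 0" and b: "sqrt x > 0" using x by auto
  have ab: "(sqrt (1 - x))^2 + (sqrt x)^2 = 1" using x by simp
  have r: "(sqrt (1 - x))^2 - (sqrt x)^2 = 1 - 2 * x" using x by simp
  show ?thesis
    using f1_change[OF a b ab, of K] unfolding f1_def measure_def r SS_def by simp
qed



abbreviation nd :: "nat \<Rightarrow> real measure" where
  "nd N \<equiv> density lborel (normal_density 0 (sqrt (1 / real N)))"

lemma prob_nd: "N > 0 \<Longrightarrow> prob_space (nd N)" by (rule prob_space_normal_density) simp

lemma prob_disorder: "N > 0 \<Longrightarrow> prob_space (disorder N M)"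
  unfolding disorder_def by (rule prob_space_PiM) (rule prob_nd)

lemma coord_indep:
  assumes "N > 0" "M > 0"
  shows "prob_space.indep_vars (disorder N M) (\<lambda>_. nd N) (\<lambda>p \<omega>. \<omega> p) ({..<N} \<times> {..<M})"
proof -
  interpret D: prob_space "disorder N M" by (rule prob_disorder) fact
  let ?I = "{..<N} \<times> {..<M}"
  have ne: "?I \<noteq> {}" using assms by auto
  have rv: "(\<lambda>\<omega>. \<omega> p) \<in> measurable (disorder N M) (nd N)" if "p \<in> ?I" for p
    unfolding disorder_def using that by (rule measurable_component_singleton)
  have "distr (disorder N M) (PiM ?I (\<lambda>_. nd N)) (\<lambda>x. \<lambda>i\<in>?I. x i) = distr (disorder N M) (disorder N M) (\<lambda>x. x)"
    by (rule distr_cong) (auto simp: disorder_def space_PiM PiE_def extensional_restrict)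
  also have "\<dots> = disorder N M" by simp
  also have "\<dots> = PiM ?I (\<lambda>i. distr (disorder N M) (nd N) (\<lambda>x. x i))"
    unfolding disorder_def
    by (intro PiM_cong refl distr_PiM_component[symmetric] prob_nd assms)
  finally show ?thesis
    by (subst D.indep_vars_iff_distr_eq_PiM'[OF ne rv]) (auto simp: disorder_def)
qed

lemma coord_distributed:
  assumes "N > 0" and p: "p \<in> {..<N} \<times> {..<M}"
  shows "distributed (disorder N M) lborel (\<lambda>\<omega>. \<omega> p) (normal_density 0 (sqrt (1 / real N)))"
proof -
  have m: "(\<lambda>\<omega>. \<omega> p) \<in> measurable (disorder N M) (nd N)"
    unfolding disorder_def using p by (rule measurable_component_singleton)
  have "distr (disorder N M) lborel (\<lambda>\<omega>. \<omega> p) = distr (disorder N M) (nd N) (\<lambda>\<omega>. \<omega> p)"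
    by (rule distr_cong) auto
  also have "\<dots> = nd N" unfolding disorder_def
    by (rule distr_PiM_component) (use p assms prob_nd in auto)
  finally show ?thesis unfolding distributed_def using m by auto
qed

lemma signed_coord_distributed:
  assumes "N > 0" and p: "p \<in> {..<N} \<times> {..<M}" and c: "c = 1 \<or> c = -1"
  shows "distributed (disorder N M) lborel (\<lambda>\<omega>. c * \<omega> p) (normal_density 0 (sqrt (1 / real N)))"
proof -
  interpret D: prob_space "disorder N M" by (rule prob_disorder) fact
  have "distributed (disorder N M) lborel (\<lambda>\<omega>. 0 + c * \<omega> p) (normal_density (0 + c * 0) (\<bar>c\<bar> * sqrt (1 / real N)))"
    by (rule D.normal_density_affine[OF coord_distributed[OF assms(1,2)]]) (use assms in auto)
  then show ?thesis using c by auto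
qed

lemma block_sum_distributed:
  assumes "N > 0" and mu: "\<mu> < M" and A: "A \<subseteq> {..<N}" "A \<noteq> {}"
    and w: "\<And>i. i < N \<Longrightarrow> w i = 1 \<or> w i = -1"
  shows "distributed (disorder N M) lborel (\<lambda>\<omega>. \<Sum>i\<in>A. w i * \<omega> (i,\<mu>))
           (normal_density 0 (sqrt (real (card A) / real N)))"
proof -
  interpret D: prob_space "disorder N M" by (rule prob_disorder) fact
  let ?I = "{..<N} \<times> {..<M}"
  have M: "M > 0" using mu by auto
  have ind: "D.indep_vars (\<lambda>_. borel) (\<lambda>p \<omega>. w (fst p) * \<omega> p) ?I"
    by (rule D.indep_vars_compose2[OF coord_indep[OF assms(1) M], where Y="\<lambda>p v. w (fst p) * v"]) simp
  have finA: "finite A" using A finite_subset by blast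
  have sub: "A \<times> {\<mu>} \<subseteq> ?I" using A mu by auto
  have "distributed (disorder N M) lborel (\<lambda>\<omega>. \<Sum>p\<in>A \<times> {\<mu>}. w (fst p) * \<omega> p)
     (normal_density (\<Sum>p\<in>A \<times> {\<mu>}. 0) (sqrt (\<Sum>p\<in>A \<times> {\<mu>}. (sqrt (1 / real N))\<^sup>2)))" (is ?d)
  proof (rule D.sum_indep_normal)
    show "finite (A \<times> {\<mu>})" using finA by simp
    show "A \<times> {\<mu>} \<noteq> {}" using A by simp
    show "D.indep_vars (\<lambda>i. borel) (\<lambda>p \<omega>. w (fst p) * \<omega> p) (A \<times> {\<mu>})"
      by (rule D.indep_vars_subset[OF ind sub])
    show "0 < sqrt (1 / real N)" using assms by simp
    fix p assume "p \<in> A \<times> {\<mu>}"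
    then show "distributed (disorder N M) lborel (\<lambda>\<omega>. w (fst p) * \<omega> p) (normal_density 0 (sqrt (1 / real N)))"
      using sub w A by (intro signed_coord_distributed assms(1)) (auto, blast)
  qed
  note d = this
  have e: "(\<lambda>\<omega>. \<Sum>p\<in>A \<times> {\<mu>}. w (fst p) * \<omega> p) = (\<lambda>\<omega>. \<Sum>i\<in>A. w i * \<omega> (i,\<mu>))"
  proof
    fix \<omega> :: "nat \<times> nat \<Rightarrow> real"
    have "A \<times> {\<mu>} = (\<lambda>i. (i,\<mu>)) ` A" by auto
    then show "(\<Sum>p\<in>A \<times> {\<mu>}. w (fst p) * \<omega> p) = (\<Sum>i\<in>A. w i * \<omega> (i,\<mu>))"
      by (simp add: sum.reindex inj_on_def)
  qed
  have f: "(\<Sum>p\<in>A \<times> {\<mu>}. (sqrt (1 / real N))\<^sup>2) = real (card A) / real N"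
    using assms finA by (simp add: card_cartesian_product)
  have z: "(\<Sum>p\<in>A \<times> {\<mu>}. 0::real) = 0" by simp
  show ?thesis using d unfolding e f z .
qed

lemma comp_borel: "p \<in> I \<Longrightarrow> (\<lambda>y. y p) \<in> borel_measurable (PiM I (\<lambda>_. nd N))"
  using measurable_component_singleton[of p I "\<lambda>_. nd N"] by simp

lemma mu_prob:
  assumes N: "N > 0" and mu: "\<mu> < M" and AD: "A \<union> Dd = {..<N}" "A \<inter> Dd = {}"
    and ne: "A \<noteq> {}" "Dd \<noteq> {}"
    and w1: "\<And>i. i < N \<Longrightarrow> w1 i = 1 \<or> w1 i = -1"
    and w2A: "\<And>i. i \<in> A \<Longrightarrow> w2 i = w1 i" and w2D: "\<And>i. i \<in> Dd \<Longrightarrow> w2 i = - w1 i"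
  shows "measure (disorder N M) {\<xi> \<in> space (disorder N M). (\<Sum>i<N. w1 i * \<xi> (i,\<mu>)) \<in> {-K..K} \<and> (\<Sum>i<N. w2 i * \<xi> (i,\<mu>)) \<in> {-K..K}}
       = measure P2 (SS (sqrt (real (card A) / real N)) (sqrt (real (card Dd) / real N)) K)"
proof -
  interpret D: prob_space "disorder N M" by (rule prob_disorder) fact
  have M: "M > 0" using mu by auto
  let ?I = "{..<N} \<times> {..<M}"
  define U where "U = (\<lambda>\<omega>::nat\<times>nat\<Rightarrow>real. \<Sum>i\<in>A. w1 i * \<omega> (i,\<mu>))"
  define V where "V = (\<lambda>\<omega>::nat\<times>nat\<Rightarrow>real. \<Sum>i\<in>Dd. w1 i * \<omega> (i,\<mu>))"
  define \<sigma>A where "\<sigma>A = sqrt (real (card A) / real N)"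
  define \<sigma>D where "\<sigma>D = sqrt (real (card Dd) / real N)"
  have finA: "finite A" and finD: "finite Dd" using AD by (metis finite_Un finite_lessThan)+
  have AN: "A \<subseteq> {..<N}" and DN: "Dd \<subseteq> {..<N}" using AD by auto
  have sA: "\<sigma>A > 0" unfolding \<sigma>A_def using ne finA N by (simp add: card_gt_0_iff)
  have sD: "\<sigma>D > 0" unfolding \<sigma>D_def using ne finD N by (simp add: card_gt_0_iff)
  have s1: "(\<Sum>i<N. w1 i * \<xi> (i,\<mu>)) = U \<xi> + V \<xi>" for \<xi>
    unfolding U_def V_def AD(1)[symmetric] by (rule sum.union_disjoint) (use finA finD AD in auto)
  have s2: "(\<Sum>i<N. w2 i * \<xi> (i,\<mu>)) = U \<xi> - V \<xi>" for \<xi>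
  proof -
    have "(\<Sum>i<N. w2 i * \<xi> (i,\<mu>)) = (\<Sum>i\<in>A. w2 i * \<xi> (i,\<mu>)) + (\<Sum>i\<in>Dd. w2 i * \<xi> (i,\<mu>))"
      unfolding AD(1)[symmetric] by (rule sum.union_disjoint) (use finA finD AD in auto)
    also have "(\<Sum>i\<in>A. w2 i * \<xi> (i,\<mu>)) = U \<xi>" unfolding U_def by (rule sum.cong) (auto simp: w2A)
    also have "(\<Sum>i\<in>Dd. w2 i * \<xi> (i,\<mu>)) = - V \<xi>" unfolding V_def by (simp add: w2D sum_negf[symmetric])
    finally show ?thesis by simp
  qed
  have ind: "D.indep_var lborel U lborel V"
  proof -
    have r: "D.indep_var (PiM (A \<times> {\<mu>}) (\<lambda>_. nd N)) (\<lambda>\<omega>. restrict (\<lambda>p. \<omega> p) (A \<times> {\<mu>}))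
                         (PiM (Dd \<times> {\<mu>}) (\<lambda>_. nd N)) (\<lambda>\<omega>. restrict (\<lambda>p. \<omega> p) (Dd \<times> {\<mu>}))"
      by (rule D.indep_var_restrict[OF coord_indep[OF N M]]) (use AD AN DN mu in auto)
    have m1: "(\<lambda>y. \<Sum>i\<in>A. w1 i * y (i,\<mu>)) \<in> measurable (PiM (A \<times> {\<mu>}) (\<lambda>_. nd N)) lborel"
      using comp_borel[of _ "A \<times> {\<mu>}" N] by (auto intro!: borel_measurable_sum borel_measurable_times)
    have m2: "(\<lambda>y. \<Sum>i\<in>Dd. w1 i * y (i,\<mu>)) \<in> measurable (PiM (Dd \<times> {\<mu>}) (\<lambda>_. nd N)) lborel"
      using comp_borel[of _ "Dd \<times> {\<mu>}" N] by (auto intro!: borel_measurable_sum borel_measurable_times)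
    have "D.indep_var lborel ((\<lambda>y. \<Sum>i\<in>A. w1 i * y (i,\<mu>)) \<circ> (\<lambda>\<omega>. restrict (\<lambda>p. \<omega> p) (A \<times> {\<mu>})))
                      lborel ((\<lambda>y. \<Sum>i\<in>Dd. w1 i * y (i,\<mu>)) \<circ> (\<lambda>\<omega>. restrict (\<lambda>p. \<omega> p) (Dd \<times> {\<mu>})))"
      by (rule D.indep_var_compose[OF r m1 m2])
    also have "((\<lambda>y. \<Sum>i\<in>A. w1 i * y (i,\<mu>)) \<circ> (\<lambda>\<omega>. restrict (\<lambda>p. \<omega> p) (A \<times> {\<mu>}))) = U"
      unfolding U_def by (auto simp: fun_eq_iff intro!: sum.cong)
    also have "((\<lambda>y. \<Sum>i\<in>Dd. w1 i * y (i,\<mu>)) \<circ> (\<lambda>\<omega>. restrict (\<lambda>p. \<omega> p) (Dd \<times> {\<mu>}))) = V"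
      unfolding V_def by (auto simp: fun_eq_iff intro!: sum.cong)
    finally show ?thesis .
  qed
  have dU: "distributed (disorder N M) lborel U (normal_density 0 \<sigma>A)"
    unfolding U_def \<sigma>A_def by (rule block_sum_distributed[OF N mu AN ne(1)]) (use w1 in auto)
  have dD: "distributed (disorder N M) lborel V (normal_density 0 \<sigma>D)"
    unfolding V_def \<sigma>D_def by (rule block_sum_distributed[OF N mu DN ne(2)]) (use w1 in auto)
  have joint: "distributed (disorder N M) (lborel \<Otimes>\<^sub>M lborel) (\<lambda>x. (U x, V x))
      (\<lambda>(x, y). ennreal (normal_density 0 \<sigma>A x) * ennreal (normal_density 0 \<sigma>D y))"
    by (rule D.distributed_joint_indep[OF _ _ dU dD ind]) (rule lborel.sigma_finite_measure_axioms)+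
  define S2 where "S2 = {z::real\<times>real. \<bar>fst z + snd z\<bar> \<le> K \<and> \<bar>fst z - snd z\<bar> \<le> K}"
  have S2m: "S2 \<in> sets (lborel \<Otimes>\<^sub>M lborel)" unfolding S2_def
  proof -
    have "{z::real\<times>real. \<bar>fst z + snd z\<bar> \<le> K \<and> \<bar>fst z - snd z\<bar> \<le> K} \<in> sets borel"
      by (intro borel_closed closed_Collect_conj closed_Collect_le continuous_intros)
    then show "{z::real\<times>real. \<bar>fst z + snd z\<bar> \<le> K \<and> \<bar>fst z - snd z\<bar> \<le> K} \<in> sets (lborel \<Otimes>\<^sub>M lborel)"
      by (rule sets_pair2)
  qed
  have ev: "{\<xi> \<in> space (disorder N M). (\<Sum>i<N. w1 i * \<xi> (i,\<mu>)) \<in> {-K..K} \<and> (\<Sum>i<N. w2 i * \<xi> (i,\<mu>)) \<in> {-K..K}}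
      = (\<lambda>x. (U x, V x)) -` S2 \<inter> space (disorder N M)"
    unfolding S2_def s1 s2 by (auto simp: abs_le_iff)
  have "emeasure (disorder N M) ((\<lambda>x. (U x, V x)) -` S2 \<inter> space (disorder N M))
     = (\<integral>\<^sup>+z. (\<lambda>(x, y). ennreal (normal_density 0 \<sigma>A x) * ennreal (normal_density 0 \<sigma>D y)) z * indicator S2 z \<partial>(lborel \<Otimes>\<^sub>M lborel))"
    by (rule distributed_emeasure[OF joint S2m])
  also have "\<dots> = emeasure P2 {z. (\<sigma>A * fst z, \<sigma>D * snd z) \<in> S2}"
    by (rule scale_P2[OF sA sD S2m])
  also have "{z. (\<sigma>A * fst z, \<sigma>D * snd z) \<in> S2} = SS \<sigma>A \<sigma>D K"
    unfolding S2_def SS_def by auto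
  finally show ?thesis unfolding ev measure_def \<sigma>A_def \<sigma>D_def by simp
qed

lemma pair_prob:
  assumes N: "N > 0" and M: "M > 0" and AD: "A \<union> Dd = {..<N}" "A \<inter> Dd = {}"
    and ne: "A \<noteq> {}" "Dd \<noteq> {}"
    and w1: "\<And>i. i < N \<Longrightarrow> w1 i = 1 \<or> w1 i = -1"
    and w2A: "\<And>i. i \<in> A \<Longrightarrow> w2 i = w1 i" and w2D: "\<And>i. i \<in> Dd \<Longrightarrow> w2 i = - w1 i"
  shows "measure (disorder N M) {\<xi> \<in> space (disorder N M). \<forall>\<mu><M. (\<Sum>i<N. w1 i * \<xi> (i,\<mu>)) \<in> {-K..K} \<and> (\<Sum>i<N. w2 i * \<xi> (i,\<mu>)) \<in> {-K..K}}
       = measure P2 (SS (sqrt (real (card A) / real N)) (sqrt (real (card Dd) / real N)) K) ^ M"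
proof -
  interpret D: prob_space "disorder N M" by (rule prob_disorder) fact
  define Bk where "Bk = (\<lambda>\<mu>::nat. {..<N} \<times> {\<mu>})"
  define Y' where "Y' = (\<lambda>\<mu> (y::nat\<times>nat\<Rightarrow>real). ((\<Sum>i<N. w1 i * y (i,\<mu>)), (\<Sum>i<N. w2 i * y (i,\<mu>))))"
  define S2 where "S2 = {z::real\<times>real. fst z \<in> {-K..K} \<and> snd z \<in> {-K..K}}"
  have S2m: "S2 \<in> sets (lborel \<Otimes>\<^sub>M lborel)" unfolding S2_def
  proof -
    have "{z::real\<times>real. fst z \<in> {-K..K} \<and> snd z \<in> {-K..K}} = {-K..K} \<times> {-K..K}" by auto
    then show "{z::real\<times>real. fst z \<in> {-K..K} \<and> snd z \<in> {-K..K}} \<in> sets (lborel \<Otimes>\<^sub>M lborel)" by simp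
  qed
  have r: "D.indep_vars (\<lambda>\<mu>. PiM (Bk \<mu>) (\<lambda>_. nd N)) (\<lambda>\<mu> \<omega>. restrict (\<lambda>p. \<omega> p) (Bk \<mu>)) {..<M}"
    by (rule D.indep_vars_restrict[OF coord_indep[OF N M]]) (auto simp: Bk_def disjoint_family_on_def)
  have mY: "Y' \<mu> \<in> measurable (PiM (Bk \<mu>) (\<lambda>_. nd N)) (lborel \<Otimes>\<^sub>M lborel)" if "\<mu> \<in> {..<M}" for \<mu>
  proof -
    have c: "(\<lambda>y. y (i,\<mu>)) \<in> borel_measurable (PiM (Bk \<mu>) (\<lambda>_. nd N))" if "i < N" for i
      by (rule comp_borel) (use that in \<open>auto simp: Bk_def\<close>)
    show ?thesis unfolding Y'_def
      by (intro measurable_Pair) (auto simp: c intro!: borel_measurable_sum borel_measurable_times)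
  qed
  have ind: "D.indep_vars (\<lambda>_. lborel \<Otimes>\<^sub>M lborel) (\<lambda>\<mu> \<omega>. Y' \<mu> (restrict (\<lambda>p. \<omega> p) (Bk \<mu>))) {..<M}"
    by (rule D.indep_vars_compose2[OF r mY])
  have Yeq: "Y' \<mu> (restrict (\<lambda>p. \<omega> p) (Bk \<mu>)) = ((\<Sum>i<N. w1 i * \<omega> (i,\<mu>)), (\<Sum>i<N. w2 i * \<omega> (i,\<mu>)))" for \<mu> \<omega>
    unfolding Y'_def Bk_def by (auto intro!: sum.cong)
  have "D.prob (\<Inter>\<mu>\<in>{..<M}. (\<lambda>\<omega>. Y' \<mu> (restrict (\<lambda>p. \<omega> p) (Bk \<mu>))) -` S2 \<inter> space (disorder N M))
     = (\<Prod>\<mu>\<in>{..<M}. D.prob ((\<lambda>\<omega>. Y' \<mu> (restrict (\<lambda>p. \<omega> p) (Bk \<mu>))) -` S2 \<inter> space (disorder N M)))"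
    by (rule D.indep_varsD[OF ind]) (use M S2m in auto)
  also have "\<dots> = (\<Prod>\<mu>\<in>{..<M}. measure P2 (SS (sqrt (real (card A) / real N)) (sqrt (real (card Dd) / real N)) K))"
  proof (rule prod.cong[OF refl])
    fix \<mu> assume "\<mu> \<in> {..<M}"
    then have mu: "\<mu> < M" by simp
    have "(\<lambda>\<omega>. Y' \<mu> (restrict (\<lambda>p. \<omega> p) (Bk \<mu>))) -` S2 \<inter> space (disorder N M)
      = {\<xi> \<in> space (disorder N M). (\<Sum>i<N. w1 i * \<xi> (i,\<mu>)) \<in> {-K..K} \<and> (\<Sum>i<N. w2 i * \<xi> (i,\<mu>)) \<in> {-K..K}}"
      unfolding Yeq S2_def by auto
    then show "D.prob ((\<lambda>\<omega>. Y' \<mu> (restrict (\<lambda>p. \<omega> p) (Bk \<mu>))) -` S2 \<inter> space (disorder N M))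
       = measure P2 (SS (sqrt (real (card A) / real N)) (sqrt (real (card Dd) / real N)) K)"
      using mu_prob[OF N mu AD ne w1 w2A w2D] by simp
  qed
  also have "\<dots> = measure P2 (SS (sqrt (real (card A) / real N)) (sqrt (real (card Dd) / real N)) K) ^ M"
    by simp
  also have "(\<Inter>\<mu>\<in>{..<M}. (\<lambda>\<omega>. Y' \<mu> (restrict (\<lambda>p. \<omega> p) (Bk \<mu>))) -` S2 \<inter> space (disorder N M))
     = {\<xi> \<in> space (disorder N M). \<forall>\<mu><M. (\<Sum>i<N. w1 i * \<xi> (i,\<mu>)) \<in> {-K..K} \<and> (\<Sum>i<N. w2 i * \<xi> (i,\<mu>)) \<in> {-K..K}}"
    unfolding Yeq S2_def using M by auto
  finally show ?thesis .
qed



lemma finite_cube: "finite (cube N)"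
  unfolding cube_def by (intro finite_PiE) auto

lemma card_cube: "card (cube N) = 2 ^ N"
  unfolding cube_def by (subst card_PiE) (auto simp: numeral_2_eq_2)

lemma cube_vals: "w \<in> cube N \<Longrightarrow> i < N \<Longrightarrow> w i = 1 \<or> w i = -1"
  unfolding cube_def by auto

lemma card_ham_le:
  assumes w1: "w1 \<in> cube N"
  shows "card {w2 \<in> cube N. hamming N w1 w2 = d} \<le> N choose d"
proof -
  let ?f = "\<lambda>w2. {i \<in> {..<N}. w1 i \<noteq> w2 i}"
  have inj: "inj_on ?f {w2 \<in> cube N. hamming N w1 w2 = d}"
  proof (rule inj_onI)
    fix u v assume u: "u \<in> {w2 \<in> cube N. hamming N w1 w2 = d}" and v: "v \<in> {w2 \<in> cube N. hamming N w1 w2 = d}"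
      and e: "?f u = ?f v"
    show "u = v"
    proof
      fix i
      show "u i = v i"
      proof (cases "i < N")
        case True
        have "(w1 i \<noteq> u i) = (w1 i \<noteq> v i)" using e True by blast
        then show ?thesis using cube_vals[OF w1 True] cube_vals[of u N i] cube_vals[of v N i] u v True by auto
      next
        case False
        then show ?thesis using u v unfolding cube_def by (auto simp: PiE_def extensional_def)
      qed
    qed
  qed
  have "card {w2 \<in> cube N. hamming N w1 w2 = d} \<le> card {B. B \<subseteq> {..<N} \<and> card B = d}"
    by (rule card_inj_on_le[OF inj]) (auto simp: hamming_def)
  also have "\<dots> = N choose d" by (subst n_subsets) auto
  finally show ?thesis .
qed

definition pairs :: "nat \<Rightarrow> nat \<Rightarrow> ((nat \<Rightarrow> real) \<times> (nat \<Rightarrow> real)) set" where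
  "pairs N d = (SIGMA w1:cube N. {w2 \<in> cube N. hamming N w1 w2 = d})"

lemma finite_pairs: "finite (pairs N d)"
  unfolding pairs_def using finite_cube by auto

lemma card_pairs: "card (pairs N d) \<le> 2 ^ N * (N choose d)"
proof -
  have "card (pairs N d) = (\<Sum>w1\<in>cube N. card {w2 \<in> cube N. hamming N w1 w2 = d})"
    unfolding pairs_def using finite_cube by (subst card_SigmaI) auto
  also have "\<dots> \<le> (\<Sum>w1\<in>cube N. N choose d)" by (intro sum_mono card_ham_le)
  also have "\<dots> = 2 ^ N * (N choose d)" by (simp add: card_cube)
  finally show ?thesis .
qed

lemma binom_H2:
  assumes d: "0 < d" "d < N"
  shows "real (N choose d) \<le> exp (real N * H2 (real d / real N))"
proof -
  define t where "t = real d / real N"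
  have t: "0 < t" "t < 1" unfolding t_def using d by auto
  have "real (N choose d) * t ^ d * (1 - t) ^ (N - d) \<le> (\<Sum>k\<le>N. real (N choose k) * t ^ k * (1 - t) ^ (N - k))"
    by (rule member_le_sum[where f="\<lambda>k. real (N choose k) * t ^ k * (1 - t) ^ (N - k)"]) (use t d in auto)
  also have "\<dots> = (t + (1 - t)) ^ N" by (rule binomial_ring[symmetric])
  also have "\<dots> = 1" by simp
  finally have le: "real (N choose d) * t ^ d * (1 - t) ^ (N - d) \<le> 1" .
  have pos: "real (N choose d) > 0" using d by simp
  have "ln (real (N choose d) * t ^ d * (1 - t) ^ (N - d)) \<le> 0"
    using le pos t by (intro ln_le_zero_iff[THEN iffD2]) auto
  then have "ln (real (N choose d)) + real d * ln t + real (N - d) * ln (1 - t) \<le> 0"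
    using pos t by (simp add: ln_mult ln_realpow)
  moreover have "real N * H2 t = - real d * ln t - real (N - d) * ln (1 - t)"
    unfolding H2_def t_def using d by (simp add: of_nat_diff field_simps)
  ultimately have "ln (real (N choose d)) \<le> real N * H2 t" by simp
  then show ?thesis unfolding t_def[symmetric] using pos by (metis exp_le_cancel_iff exp_ln)
qed

lemma pair_prob_cube:
  assumes N: "N > 0" and M: "M > 0" and d: "0 < d" "d < N"
    and w1: "w1 \<in> cube N" and w2: "w2 \<in> cube N" and h: "hamming N w1 w2 = d"
  shows "measure (disorder N M) {\<xi> \<in> space (disorder N M). is_solution N M K \<xi> w1 \<and> is_solution N M K \<xi> w2}
     = measure P2 (SS (sqrt (1 - real d / real N)) (sqrt (real d / real N)) K) ^ M"
proof -
  define Dd where "Dd = {i \<in> {..<N}. w1 i \<noteq> w2 i}"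
  define A where "A = {i \<in> {..<N}. w1 i = w2 i}"
  have AD: "A \<union> Dd = {..<N}" "A \<inter> Dd = {}" unfolding A_def Dd_def by auto
  have cD: "card Dd = d" using h unfolding hamming_def Dd_def by simp
  have "card A + card Dd = N"
    using card_Un_disjoint[of A Dd] AD by (metis card_lessThan finite_Un finite_lessThan)
  then have cA: "card A = N - d" using cD by simp
  have ne: "A \<noteq> {}" "Dd \<noteq> {}" using cA cD d by auto
  have w1v: "\<And>i. i < N \<Longrightarrow> w1 i = 1 \<or> w1 i = -1" using cube_vals[OF w1] by blast
  have w2A: "\<And>i. i \<in> A \<Longrightarrow> w2 i = w1 i" unfolding A_def by auto
  have w2D: "\<And>i. i \<in> Dd \<Longrightarrow> w2 i = - w1 i"
  proof -
    fix i assume "i \<in> Dd"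
    then have "i < N" "w1 i \<noteq> w2 i" unfolding Dd_def by auto
    then show "w2 i = - w1 i" using cube_vals[OF w1] cube_vals[OF w2] by fastforce
  qed
  have e: "{\<xi> \<in> space (disorder N M). is_solution N M K \<xi> w1 \<and> is_solution N M K \<xi> w2}
    = {\<xi> \<in> space (disorder N M). \<forall>\<mu><M. (\<Sum>i<N. w1 i * \<xi> (i,\<mu>)) \<in> {-K..K} \<and> (\<Sum>i<N. w2 i * \<xi> (i,\<mu>)) \<in> {-K..K}}"
    unfolding is_solution_def using w1 w2 by auto
  have r: "real (card A) / real N = 1 - real d / real N" using cA d N by (simp add: of_nat_diff field_simps)
  have eq: "measure (disorder N M) {\<xi> \<in> space (disorder N M). \<forall>\<mu><M. (\<Sum>i<N. w1 i * \<xi> (i,\<mu>)) \<in> {-K..K} \<and> (\<Sum>i<N. w2 i * \<xi> (i,\<mu>)) \<in> {-K..K}}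
       = measure P2 (SS (sqrt (real (card A) / real N)) (sqrt (real (card Dd) / real N)) K) ^ M"
    by (rule pair_prob[OF N M AD ne w1v w2A w2D])
  show ?thesis unfolding e eq r cD ..
qed

lemma sol_sets:
  assumes N: "N > 0" and M: "M > 0"
  shows "{\<xi> \<in> space (disorder N M). is_solution N M K \<xi> w} \<in> sets (disorder N M)"
proof (cases "w \<in> cube N")
  case False
  then have "{\<xi> \<in> space (disorder N M). is_solution N M K \<xi> w} = {}" unfolding is_solution_def by auto
  then show ?thesis by (simp only: sets.empty_sets)
next
  case True
  define f where "f = (\<lambda>\<mu> (\<xi>::nat\<times>nat\<Rightarrow>real). \<Sum>i<N. w i * \<xi> (i,\<mu>))"
  have fm: "f \<mu> \<in> borel_measurable (disorder N M)" if "\<mu> < M" for \<mu>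
    unfolding f_def disorder_def using that
    by (auto intro!: borel_measurable_sum borel_measurable_times comp_borel)
  have "{\<xi> \<in> space (disorder N M). is_solution N M K \<xi> w} = (\<Inter>\<mu>\<in>{..<M}. f \<mu> -` {-K..K} \<inter> space (disorder N M))"
    unfolding is_solution_def f_def using True M by auto
  also have "\<dots> \<in> sets (disorder N M)"
    using M by (intro sets.finite_INT) (auto intro: measurable_sets fm)
  finally show ?thesis .
qed

lemma prob_bound:
  assumes N: "N > 0" and M: "M > 0" and dd: "d = nat \<lfloor>real N * x\<rfloor>" and d: "0 < d" "d < N"
  shows "measure (disorder N M) {\<xi> \<in> space (disorder N M). Z2 N M x K \<xi> > 0}
    \<le> 2 ^ N * real (N choose d) * measure P2 (SS (sqrt (1 - real d / real N)) (sqrt (real d / real N)) K) ^ M"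
proof -
  interpret D: prob_space "disorder N M" by (rule prob_disorder) fact
  define q where "q = measure P2 (SS (sqrt (1 - real d / real N)) (sqrt (real d / real N)) K)"
  define E where "E = (\<lambda>p. {\<xi> \<in> space (disorder N M). is_solution N M K \<xi> (fst p) \<and> is_solution N M K \<xi> (snd p)})"
  have Em: "E p \<in> sets (disorder N M)" for p
  proof -
    have "E p = {\<xi> \<in> space (disorder N M). is_solution N M K \<xi> (fst p)} \<inter> {\<xi> \<in> space (disorder N M). is_solution N M K \<xi> (snd p)}"
      unfolding E_def by auto
    then show ?thesis using sol_sets[OF N M] by auto
  qed
  have sub: "{\<xi> \<in> space (disorder N M). Z2 N M x K \<xi> > 0} \<subseteq> (\<Union>p\<in>pairs N d. E p)"
  proof
    fix \<xi> assume "\<xi> \<in> {\<xi> \<in> space (disorder N M). Z2 N M x K \<xi> > 0}"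
    then have sp: "\<xi> \<in> space (disorder N M)" and z: "Z2 N M x K \<xi> > 0" by auto
    from z have "{(w1, w2). is_solution N M K \<xi> w1 \<and> is_solution N M K \<xi> w2 \<and>
       hamming N w1 w2 = nat \<lfloor>real N * x\<rfloor>} \<noteq> {}" unfolding Z2_def by (intro notI) simp
    then obtain w1 w2 where p: "is_solution N M K \<xi> w1" "is_solution N M K \<xi> w2" "hamming N w1 w2 = d"
      unfolding dd by blast
    then have "(w1, w2) \<in> pairs N d" unfolding pairs_def is_solution_def by auto
    moreover have "\<xi> \<in> E (w1, w2)" unfolding E_def using sp p by auto
    ultimately show "\<xi> \<in> (\<Union>p\<in>pairs N d. E p)" by blast
  qed
  have "measure (disorder N M) {\<xi> \<in> space (disorder N M). Z2 N M x K \<xi> > 0} \<le> measure (disorder N M) (\<Union>p\<in>pairs N d. E p)"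
    by (rule D.finite_measure_mono[OF sub]) (use Em finite_pairs in auto)
  also have "\<dots> \<le> (\<Sum>p\<in>pairs N d. measure (disorder N M) (E p))"
    by (rule D.finite_measure_subadditive_finite) (use Em finite_pairs in auto)
  also have "\<dots> = (\<Sum>p\<in>pairs N d. q ^ M)"
  proof (rule sum.cong[OF refl])
    fix p assume "p \<in> pairs N d"
    then have "fst p \<in> cube N" "snd p \<in> cube N" "hamming N (fst p) (snd p) = d" unfolding pairs_def by auto
    then show "measure (disorder N M) (E p) = q ^ M" unfolding E_def q_def
      by (rule pair_prob_cube[OF N M d])
  qed
  also have "\<dots> = real (card (pairs N d)) * q ^ M" by simp
  also have "\<dots> \<le> 2 ^ N * real (N choose d) * q ^ M"
  proof -
    have "real (card (pairs N d)) \<le> 2 ^ N * real (N choose d)"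
    proof -
      have "real (card (pairs N d)) \<le> real (2 ^ N * (N choose d))" using card_pairs[of N d] by (rule of_nat_mono)
      then show ?thesis by simp
    qed
    moreover have "q ^ M \<ge> 0" unfolding q_def by simp
    ultimately show ?thesis by (rule mult_right_mono)
  qed
  finally show ?thesis unfolding q_def .
qed



lemma ev_real_ge:
  assumes c: "(c::real) > 0"
  shows "eventually (\<lambda>N. real N * c \<ge> 1) sequentially"
proof -
  obtain n where n: "1 / c < real n" using reals_Archimedean2 by blast
  show ?thesis unfolding eventually_sequentially
  proof (intro exI allI impI)
    fix N assume "n \<le> N"
    then have "1 / c \<le> real N" using n by linarith
    then show "1 \<le> real N * c" using c by (simp add: field_simps)
  qed
qed

lemma H2_cont:
  assumes "0 < x" "x < 1" and t: "t \<longlonglongrightarrow> x"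
  shows "(\<lambda>n. H2 (t n)) \<longlonglongrightarrow> H2 x"
  unfolding H2_def using assms by (intro tendsto_intros) auto

lemma floor_ratio:
  assumes x: "0 < x" "x < 1"
  shows "(\<lambda>N. real (nat \<lfloor>real N * x\<rfloor>) / real N) \<longlonglongrightarrow> x"
proof (rule tendsto_sandwich[where f="\<lambda>N. x - 1 / real N" and h="\<lambda>N. x"])
  show "eventually (\<lambda>N. x - 1 / real N \<le> real (nat \<lfloor>real N * x\<rfloor>) / real N) sequentially"
    using eventually_gt_at_top[of 0]
  proof eventually_elim
    case (elim N)
    have "real N * x - 1 \<le> real_of_int \<lfloor>real N * x\<rfloor>" by linarith
    then have "(real N * x - 1) / real N \<le> real_of_int \<lfloor>real N * x\<rfloor> / real N" by (intro divide_right_mono) auto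
    moreover have "(real N * x - 1) / real N = x - 1 / real N" using elim by (simp add: field_simps)
    moreover have "real (nat \<lfloor>real N * x\<rfloor>) = real_of_int \<lfloor>real N * x\<rfloor>" using x by simp
    ultimately show ?case by simp
  qed
  show "eventually (\<lambda>N. real (nat \<lfloor>real N * x\<rfloor>) / real N \<le> x) sequentially"
    using eventually_gt_at_top[of 0]
  proof eventually_elim
    case (elim N)
    have "real_of_int \<lfloor>real N * x\<rfloor> \<le> real N * x" by linarith
    then have "real_of_int \<lfloor>real N * x\<rfloor> / real N \<le> real N * x / real N" by (intro divide_right_mono) auto
    moreover have "real N * x / real N = x" using elim by simp
    moreover have "real (nat \<lfloor>real N * x\<rfloor>) = real_of_int \<lfloor>real N * x\<rfloor>" using x by simp
    ultimately show ?case by simp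
  qed
  show "(\<lambda>N. x - 1 / real N) \<longlonglongrightarrow> x" by real_asymp
qed simp

lemma exp_lin_zero:
  assumes "(e::real) > 0"
  shows "(\<lambda>N. exp (- e * real N - c)) \<longlonglongrightarrow> 0"
proof -
  have "(\<lambda>N. exp (- c) * exp (- e) ^ N) \<longlonglongrightarrow> exp (- c) * 0"
    using assms by (intro tendsto_intros LIMSEQ_power_zero) auto
  moreover have "exp (- e * real N - c) = exp (- c) * exp (- e) ^ N" for N
  proof -
    have "exp (- e * real N - c) = exp (- c) * exp (real N * (- e))" by (simp add: mult_exp_exp algebra_simps)
    also have "\<dots> = exp (- c) * exp (- e) ^ N" by (simp only: exp_of_nat_mult)
    finally show ?thesis .
  qed
  ultimately show ?thesis by simp
qed

theorem mainTheorem1: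
  fixes K \<alpha> x :: real
  assumes "K > 0" and "\<alpha> > 0" and "0 < x" and "x < 1"
    and "\<alpha> > alpha_UB x K"
  shows "(\<lambda>N. measure (disorder N (numM \<alpha> N))
            {\<xi> \<in> space (disorder N (numM \<alpha> N)). Z2 N (numM \<alpha> N) x K \<xi> > 0})
         \<longlonglongrightarrow> 0"
proof -
  note Kp = assms(1) and ap = assms(2) and x0 = assms(3) and x1 = assms(4) and hyp = assms(5)
  interpret P: prob_space P2 by (rule prob_P2)
  define a where "a = sqrt (1 - x)"
  define b where "b = sqrt x"
  have a0: "a > 0" and b0: "b > 0" unfolding a_def b_def using x0 x1 by auto
  define G where "G = (\<lambda>k. measure P2 (SS a b k))"
  have Gmono: "G k \<le> G k'" if "k \<le> k'" for k k'
  proof -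
    have "SS a b k \<subseteq> SS a b k'" using that a0 b0 unfolding SS_alt[OF less_imp_le[OF a0] less_imp_le[OF b0]] by auto
    then show ?thesis unfolding G_def by (rule P.finite_measure_mono) (rule SS_P2)
  qed
  have gK0: "G K > 0" unfolding G_def by (rule P2_SS_pos[OF a0 b0 Kp])
  have f1eq: "f1 x K = G K" unfolding G_def a_def b_def by (rule f1_SS[OF x0 x1])
  have lnneg: "ln (G K) < 0" using gK0 P2_SS_lt1[OF a0 b0, of K] unfolding G_def by simp
  have L: "ln 2 + H2 x + \<alpha> * ln (G K) < 0"
  proof -
    have "- (ln 2 + H2 x) / ln (G K) < \<alpha>" using hyp unfolding alpha_UB_def f1eq .
    then have "\<alpha> * ln (G K) < - (ln 2 + H2 x)" using lnneg by (simp add: neg_divide_less_eq)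
    then show ?thesis by simp
  qed
  define L where "L = ln 2 + H2 x + \<alpha> * ln (G K)"
  have Lneg: "L < 0" unfolding L_def by (rule L)
  have "(\<lambda>n. ln 2 + H2 x + \<alpha> * ln (G (K + 1 / (real n + 1)))) \<longlonglongrightarrow> L"
    unfolding L_def G_def using gK0 unfolding G_def
    by (intro tendsto_intros SS_cont) (use a0 b0 in auto)
  then have "eventually (\<lambda>n. ln 2 + H2 x + \<alpha> * ln (G (K + 1 / (real n + 1))) < L / 2) sequentially"
    using Lneg by (intro order_tendstoD(2)) auto
  then obtain n0 where n0: "ln 2 + H2 x + \<alpha> * ln (G (K + 1 / (real n0 + 1))) < L / 2"
    unfolding eventually_sequentially by auto
  define K' where "K' = K + 1 / (real n0 + 1)"
  define g' where "g' = G K'"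
  have KK': "K < K'" unfolding K'_def by simp
  have g'0: "g' > 0" unfolding g'_def using Gmono[of K K'] KK' gK0 by simp
  have g'1: "g' < 1" unfolding g'_def G_def by (rule P2_SS_lt1[OF a0 b0])
  have lng': "ln g' < 0" using g'0 g'1 by simp
  define \<delta> where "\<delta> = - (ln 2 + H2 x + \<alpha> * ln g')"
  have \<delta>0: "\<delta> > 0" unfolding \<delta>_def g'_def K'_def using n0 Lneg by simp
  define d where "d = (\<lambda>N::nat. nat \<lfloor>real N * x\<rfloor>)"
  define t where "t = (\<lambda>N. real (d N) / real N)"
  define cN where "cN = (\<lambda>N. min (sqrt (1 - t N) / a) (sqrt (t N) / b))"
  have tlim: "t \<longlonglongrightarrow> x" unfolding t_def d_def by (rule floor_ratio[OF x0 x1])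
  have "cN \<longlonglongrightarrow> min (sqrt (1 - x) / a) (sqrt x / b)"
    unfolding cN_def by (intro tendsto_intros tlim) (use a0 b0 in auto)
  then have clim: "cN \<longlonglongrightarrow> 1" unfolding a_def b_def using a0 b0 unfolding a_def b_def by simp
  have "(\<lambda>N. K / cN N) \<longlonglongrightarrow> K / 1" by (intro tendsto_intros clim) auto
  then have ev1: "eventually (\<lambda>N. K / cN N < K') sequentially" using KK' by (intro order_tendstoD(2)) auto
  have "(\<lambda>N. H2 (t N)) \<longlonglongrightarrow> H2 x" by (rule H2_cont[OF x0 x1 tlim])
  then have ev2: "eventually (\<lambda>N. H2 (t N) < H2 x + \<delta> / 2) sequentially" using \<delta>0 by (intro order_tendstoD(2)) auto
  have ev3: "eventually (\<lambda>N. real N * x \<ge> 1) sequentially" by (rule ev_real_ge[OF x0])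
  have ev4: "eventually (\<lambda>N. real N * \<alpha> \<ge> 1) sequentially" by (rule ev_real_ge[OF ap])
  have ev5: "eventually (\<lambda>N. measure (disorder N (numM \<alpha> N))
            {\<xi> \<in> space (disorder N (numM \<alpha> N)). Z2 N (numM \<alpha> N) x K \<xi> > 0} \<le> exp (- (\<delta> / 2) * real N - ln g')) sequentially"
    using ev1 ev2 ev3 ev4
  proof eventually_elim
    case (elim N)
    define M where "M = numM \<alpha> N"
    have N0: "N > 0" using elim(3) by (cases N) auto
    have Nx: "real N * x < real N" using N0 x1 by simp
    have dd: "real (d N) = real_of_int \<lfloor>real N * x\<rfloor>" unfolding d_def using x0 by simp
    have d0: "d N > 0" unfolding d_def using elim(3) by linarith
    have dN: "d N < N" using dd Nx by linarith
    have MM: "real M = real_of_int \<lfloor>\<alpha> * real N\<rfloor>" unfolding M_def numM_def using ap by simp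
    have M0: "M > 0" using MM elim(4) by (simp add: mult.commute) linarith
    have Mge: "real M \<ge> \<alpha> * real N - 1" using MM by linarith
    have t0: "0 < t N" "t N < 1" unfolding t_def using d0 dN N0 by auto
    define aN where "aN = sqrt (1 - t N)"
    define bN where "bN = sqrt (t N)"
    have aN0: "aN > 0" and bN0: "bN > 0" unfolding aN_def bN_def using t0 by auto
    have c0: "cN N > 0" unfolding cN_def aN_def[symmetric] bN_def[symmetric] using aN0 bN0 a0 b0 by simp
    have ca: "cN N * a \<le> aN" unfolding cN_def aN_def[symmetric] bN_def[symmetric] using a0
      by (metis min.cobounded1 mult.commute pos_le_divide_eq)
    have cb: "cN N * b \<le> bN" unfolding cN_def aN_def[symmetric] bN_def[symmetric] using b0
      by (metis min.cobounded2 mult.commute pos_le_divide_eq)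
    have sub: "SS aN bN K \<subseteq> SS a b K'"
    proof -
      have "SS aN bN K \<subseteq> SS a b (K / cN N)" by (rule SS_mono[OF c0 _ _ ca cb]) (use a0 b0 in auto)
      also have "\<dots> \<subseteq> SS a b K'" using elim(1) a0 b0 unfolding SS_alt[OF less_imp_le[OF a0] less_imp_le[OF b0]] by auto
      finally show ?thesis .
    qed
    define q where "q = measure P2 (SS aN bN K)"
    have q0: "q \<ge> 0" unfolding q_def by simp
    have qg: "q \<le> g'" unfolding q_def g'_def G_def by (rule P.finite_measure_mono[OF sub SS_P2])
    have "measure (disorder N M) {\<xi> \<in> space (disorder N M). Z2 N M x K \<xi> > 0}
        \<le> 2 ^ N * real (N choose d N) * q ^ M"
      unfolding q_def aN_def bN_def t_def
      by (rule prob_bound[OF N0 M0 _ d0 dN]) (simp add: d_def)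
    also have "\<dots> \<le> 2 ^ N * exp (real N * H2 (t N)) * g' ^ M"
    proof (intro mult_mono power_mono)
      show "real (N choose d N) \<le> exp (real N * H2 (t N))" unfolding t_def by (rule binom_H2[OF d0 dN])
    qed (use q0 qg in auto)
    also have "\<dots> = exp (real N * ln 2 + real N * H2 (t N) + real M * ln g')"
    proof -
      have "(2::real) ^ N = exp (real N * ln 2)" by (simp add: exp_of_nat_mult)
      moreover have "g' ^ M = exp (real M * ln g')" using g'0 by (simp add: exp_of_nat_mult)
      ultimately show ?thesis by (simp add: exp_add)
    qed
    also have "\<dots> \<le> exp (- (\<delta> / 2) * real N - ln g')"
    proof -
      have "real M * ln g' \<le> (\<alpha> * real N - 1) * ln g'" using Mge lng' by (intro mult_right_mono_neg) auto
      moreover have "real N * H2 (t N) \<le> real N * (H2 x + \<delta> / 2)" using elim(2) by (intro mult_left_mono) auto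
      ultimately have "real N * ln 2 + real N * H2 (t N) + real M * ln g'
          \<le> real N * (ln 2 + H2 x + \<alpha> * ln g') + real N * (\<delta> / 2) - ln g'"
        by (simp add: algebra_simps)
      also have "\<dots> = - (\<delta> / 2) * real N - ln g'" unfolding \<delta>_def by (simp add: field_simps)
      finally show ?thesis by simp
    qed
    finally show ?case unfolding M_def .
  qed
  show ?thesis
  proof (rule tendsto_sandwich[OF _ ev5])
    show "eventually (\<lambda>N. 0 \<le> measure (disorder N (numM \<alpha> N))
            {\<xi> \<in> space (disorder N (numM \<alpha> N)). Z2 N (numM \<alpha> N) x K \<xi> > 0}) sequentially" by simp
    show "(\<lambda>N. exp (- (\<delta> / 2) * real N - ln g')) \<longlonglongrightarrow> 0" by (rule exp_lin_zero) (use \<delta>0 in simp)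
  qed simp
qed

end
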